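(* Let $G$ be a finite pseudo reflection group and $\Upsilon=\{\mu_s,\tau_i\}$ admissible parameters. Let $V_G=\bigoplus_{i\in P}\mathbb Cv_i$, $\iota(w)v_i=v_{w(i)}$, and let $p_i\in\mathrm{End}(V_G)$ be defined by $p_i(v_i)=\tau_iv_i$ and $p_i(v_j)=\alpha_{i,j}v_i$ for $j\neq i$, where $\alpha_{i,j}=\sum_{s\in R(i,j)}\mu_s$. Then the assignment $T_w\mapsto\iota(w)$ ($w\in G$), $e_i\mapsto p_i$ ($i\in P$) extends to a representation $B_G(\Upsilon)\to\mathrm{End}(V_G)$.
   Context: $G\subset U(V)$ a finite pseudo reflection group with pseudo reflections $R$, reflecting hyperplanes $\{H_i\}_{i\in P}$, $w(i)$ defined by $H_{w(i)}=w(H_i)$, $R(i,j)=\{s\in R:s(H_j)=H_i\}$, $s_i$ the generator of the pointwise stabilizer $G_i$ of $H_i$ with exceptional eigenvalue $e^{2\pi\sqrt{-1}/|G_i|}$. $H_i\pitchfork H_j$ ($i\ne j$) means $\{k:H_i\cap H_j\subset H_k\}=\{i,j\}$; a codimension-2 edge is crossing if it is $H_i\cap H_j$ with $H_i\pitchfork H_j$, noncrossing otherwise; $V_w$ is the fixed space of $w$. Admissible $\Upsilon=\{\mu_s,\tau_i\}$: $\mu_s\ne0$ constant on conjugacy classes of $R$, $\tau_i$ constant on $G$-orbits of $P$. $B_G(\Upsilon)$: unital $\mathbb C$-algebra generated by $T_w$ ($w\in G$, $T_1=1$) and $e_i$ ($i\in P$) with relations (0) $T_{w_1}T_{w_2}=T_{w_1w_2}$;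 (1) $T_{s_i}e_i=e_iT_{s_i}=e_i$; (1') $T_we_i=e_iT_w=e_i$ if $w(H_i)=H_i$ and $H_i\cap V_w$ is a noncrossing codimension-2 edge; (2) $e_i^2=\tau_ie_i$; (3) $T_we_j=e_iT_w$ if $w(H_j)=H_i$; (4) $e_ie_j=e_je_i$ if $H_i\pitchfork H_j$; (5) $e_ie_j=(\sum_{s\in R(i,j)}\mu_sT_s)e_j=e_i(\sum_{s\in R(i,j)}\mu_sT_s)$ if $i\neq j$, $H_i\cap H_j$ noncrossing, $R(i,j)\ne\emptyset$; (6) $e_ie_j=0$ if $i\ne j$, $H_i\cap H_j$ noncrossing, $R(i,j)=\emptyset$. *)

theory Defs
  imports "HOL-Analysis.Analysis"
begin

type_synonym 'n cmat = "complex^'n^'n"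
type_synonym 'n hyp = "(complex^'n) set"

text \<open>Unitary matrices: the conjugate transpose is a left inverse.\<close>
definition unitary :: "'n::finite cmat \<Rightarrow> bool" where
  "unitary A \<longleftrightarrow> (\<chi> i j. cnj (A $ j $ i)) ** A = mat 1"

definition fixspace :: "'n::finite cmat \<Rightarrow> 'n hyp" where
  "fixspace w = {v. w *v v = v}"

text \<open>A (complex linear) hyperplane: kernel of a nonzero linear functional.\<close>
definition is_hyperplane :: "'n::finite hyp \<Rightarrow> bool" where
  "is_hyperplane H \<longleftrightarrow> (\<exists>a::complex^'n. a \<noteq> 0 \<and> H = {v. (\<Sum>k\<in>UNIV. a $ k * v $ k) = 0})"

text \<open>Pseudo reflections of G: non-identity elements fixing a hyperplane pointwise.\<close>
definition prefl :: "'n::finite cmat set \<Rightarrow> 'n cmat set" where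
  "prefl G = {s\<in>G. s \<noteq> mat 1 \<and> is_hyperplane (fixspace s)}"

text \<open>G is a finite subgroup of U(V) generated by its pseudo reflections.\<close>
definition pseudo_reflection_group :: "'n::finite cmat set \<Rightarrow> bool" where
  "pseudo_reflection_group G \<longleftrightarrow> finite G \<and> (\<forall>g\<in>G. unitary g)
     \<and> mat 1 \<in> G \<and> (\<forall>g\<in>G. \<forall>h\<in>G. g ** h \<in> G)
     \<and> G = {foldr (**) l (mat 1) | l. set l \<subseteq> prefl G}"

text \<open>Reflecting hyperplanes (the index set P is the set of hyperplanes itself).\<close>
definition hyps :: "'n::finite cmat set \<Rightarrow> 'n hyp set" where
  "hyps G = fixspace ` prefl G"

definition act :: "'n::finite cmat \<Rightarrow> 'n hyp \<Rightarrow> 'n hyp" where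
  "act w H = (\<lambda>v. w *v v) ` H"

definition Rij :: "'n::finite cmat set \<Rightarrow> 'n hyp \<Rightarrow> 'n hyp \<Rightarrow> 'n cmat set" where
  "Rij G Hi Hj = {s \<in> prefl G. act s Hj = Hi}"

text \<open>Pointwise stabilizer G_i and its distinguished generator s_i.\<close>
definition stab :: "'n::finite cmat set \<Rightarrow> 'n hyp \<Rightarrow> 'n cmat set" where
  "stab G H = {g\<in>G. \<forall>v\<in>H. g *v v = v}"

definition sgen :: "'n::finite cmat set \<Rightarrow> 'n hyp \<Rightarrow> 'n cmat" where
  "sgen G H = (THE s. s \<in> stab G H \<and>
     (\<exists>v. v \<noteq> 0 \<and> s *v v = exp (2 * pi * \<i> / of_nat (card (stab G H))) *s v))"

text \<open>Set of hyperplanes of the arrangement containing a subspace X.\<close>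
definition above :: "'n::finite cmat set \<Rightarrow> 'n hyp \<Rightarrow> 'n hyp set" where
  "above G X = {K \<in> hyps G. X \<subseteq> K}"

definition transversal :: "'n::finite cmat set \<Rightarrow> 'n hyp \<Rightarrow> 'n hyp \<Rightarrow> bool" where
  "transversal G Hi Hj \<longleftrightarrow> Hi \<noteq> Hj \<and> above G (Hi \<inter> Hj) = {Hi, Hj}"

text \<open>Codimension-2 edges are intersections of two distinct reflecting hyperplanes.\<close>
definition codim2_edge :: "'n::finite cmat set \<Rightarrow> 'n hyp \<Rightarrow> bool" where
  "codim2_edge G X \<longleftrightarrow> (\<exists>Hi\<in>hyps G. \<exists>Hj\<in>hyps G. Hi \<noteq> Hj \<and> X = Hi \<inter> Hj)"

definition crossing_edge :: "'n::finite cmat set \<Rightarrow> 'n hyp \<Rightarrow> bool" where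
  "crossing_edge G X \<longleftrightarrow> (\<exists>Hi\<in>hyps G. \<exists>Hj\<in>hyps G. transversal G Hi Hj \<and> X = Hi \<inter> Hj)"

definition noncrossing_edge :: "'n::finite cmat set \<Rightarrow> 'n hyp \<Rightarrow> bool" where
  "noncrossing_edge G X \<longleftrightarrow> codim2_edge G X \<and> \<not> crossing_edge G X"

text \<open>Admissible parameters.\<close>
definition admissible :: "'n::finite cmat set \<Rightarrow> ('n cmat \<Rightarrow> complex) \<Rightarrow> ('n hyp \<Rightarrow> complex) \<Rightarrow> bool" where
  "admissible G mu tau \<longleftrightarrow>
     (\<forall>s\<in>prefl G. mu s \<noteq> 0) \<and>
     (\<forall>s\<in>prefl G. \<forall>g\<in>G. mu (g ** s ** matrix_inv g) = mu s) \<and>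
     (\<forall>H\<in>hyps G. \<forall>w\<in>G. tau (act w H) = tau H)"

text \<open>Endomorphisms of V_G = free C-module on the hyperplanes, as matrices indexed by hyperplanes
  (entry (k,j) = coefficient of v_k in the image of v_j).\<close>
type_synonym 'n endo = "'n hyp \<Rightarrow> 'n hyp \<Rightarrow> complex"

definition emul :: "'n::finite cmat set \<Rightarrow> 'n endo \<Rightarrow> 'n endo \<Rightarrow> 'n endo" where
  "emul G A B = (\<lambda>i j. \<Sum>k\<in>hyps G. A i k * B k j)"

definition eone :: "'n::finite endo" where
  "eone = (\<lambda>i j. if i = j then 1 else 0)"

definition ezero :: "'n::finite endo" where
  "ezero = (\<lambda>i j. 0)"

definition esmult :: "complex \<Rightarrow> 'n::finite endo \<Rightarrow> 'n endo" where
  "esmult c A = (\<lambda>i j. c * A i j)"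

text \<open>Equality in End(V_G): entries indexed by P x P agree.\<close>
definition eeq :: "'n::finite cmat set \<Rightarrow> 'n endo \<Rightarrow> 'n endo \<Rightarrow> bool" where
  "eeq G A B \<longleftrightarrow> (\<forall>i\<in>hyps G. \<forall>j\<in>hyps G. A i j = B i j)"

text \<open>iota(w) v_i = v_{w(i)}.\<close>
definition iota :: "'n::finite cmat \<Rightarrow> 'n endo" where
  "iota w = (\<lambda>k i. if k = act w i then 1 else 0)"

definition alpha :: "'n::finite cmat set \<Rightarrow> ('n cmat \<Rightarrow> complex) \<Rightarrow> 'n hyp \<Rightarrow> 'n hyp \<Rightarrow> complex" where
  "alpha G mu Hi Hj = (\<Sum>s\<in>Rij G Hi Hj. mu s)"

text \<open>p_i v_i = tau_i v_i, p_i v_j = alpha_{i,j} v_i for j /= i.\<close>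
definition pmap :: "'n::finite cmat set \<Rightarrow> ('n cmat \<Rightarrow> complex) \<Rightarrow> ('n hyp \<Rightarrow> complex) \<Rightarrow> 'n hyp \<Rightarrow> 'n endo" where
  "pmap G mu tau Hi = (\<lambda>k j. if k = Hi then (if j = Hi then tau Hi else alpha G mu Hi j) else 0)"

text \<open>The element sum_{s in R(i,j)} mu_s T_s, mapped to End(V_G).\<close>
definition rsum :: "'n::finite cmat set \<Rightarrow> ('n cmat \<Rightarrow> complex) \<Rightarrow> 'n hyp \<Rightarrow> 'n hyp \<Rightarrow> 'n endo" where
  "rsum G mu Hi Hj = (\<lambda>k l. \<Sum>s\<in>Rij G Hi Hj. mu s * iota s k l)"

text \<open>Families (Tw, e) in End(V_G) satisfying the defining relations (0)-(6) of B_G(Upsilon);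
  by the universal property of the presentation these are exactly the algebra
  homomorphisms B_G(Upsilon) -> End(V_G).\<close>
definition satisfies_BG_relations ::
  "'n::finite cmat set \<Rightarrow> ('n cmat \<Rightarrow> complex) \<Rightarrow> ('n hyp \<Rightarrow> complex)
    \<Rightarrow> ('n cmat \<Rightarrow> 'n endo) \<Rightarrow> ('n hyp \<Rightarrow> 'n endo) \<Rightarrow> bool" where
  "satisfies_BG_relations G mu tau T e \<longleftrightarrow>
    eeq G (T (mat 1)) eone \<and>
    (\<forall>w1\<in>G. \<forall>w2\<in>G. eeq G (emul G (T w1) (T w2)) (T (w1 ** w2))) \<and>
    (\<forall>i\<in>hyps G. eeq G (emul G (T (sgen G i)) (e i)) (e i)
                \<and> eeq G (emul G (e i) (T (sgen G i))) (e i)) \<and>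
    (\<forall>i\<in>hyps G. \<forall>w\<in>G. act w i = i \<and> noncrossing_edge G (i \<inter> fixspace w) \<longrightarrow>
        eeq G (emul G (T w) (e i)) (e i) \<and> eeq G (emul G (e i) (T w)) (e i)) \<and>
    (\<forall>i\<in>hyps G. eeq G (emul G (e i) (e i)) (esmult (tau i) (e i))) \<and>
    (\<forall>i\<in>hyps G. \<forall>j\<in>hyps G. \<forall>w\<in>G. act w j = i \<longrightarrow>
        eeq G (emul G (T w) (e j)) (emul G (e i) (T w))) \<and>
    (\<forall>i\<in>hyps G. \<forall>j\<in>hyps G. transversal G i j \<longrightarrow>
        eeq G (emul G (e i) (e j)) (emul G (e j) (e i))) \<and>
    (\<forall>i\<in>hyps G. \<forall>j\<in>hyps G. i \<noteq> j \<and> noncrossing_edge G (i \<inter> j) \<and> Rij G i j \<noteq> {} \<longrightarrow>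
        eeq G (emul G (e i) (e j)) (emul G (rsum G mu i j) (e j)) \<and>
        eeq G (emul G (e i) (e j)) (emul G (e i) (rsum G mu i j))) \<and>
    (\<forall>i\<in>hyps G. \<forall>j\<in>hyps G. i \<noteq> j \<and> noncrossing_edge G (i \<inter> j) \<and> Rij G i j = {} \<longrightarrow>
        eeq G (emul G (e i) (e j)) ezero)"

end

theory Submission
  imports Defs
begin

definition herm :: "complex^'n::finite \<Rightarrow> complex^'n \<Rightarrow> complex" where
  "herm x y = (\<Sum>k\<in>UNIV. cnj (x$k) * y$k)"

definition cv :: "complex^'n::finite \<Rightarrow> complex^'n" where
  "cv a = (\<chi> k. cnj (a$k))"

definition adj :: "'n::finite cmat \<Rightarrow> 'n cmat" where
  "adj A = (\<chi> i j. cnj (A $ j $ i))"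

lemma herm_add_right: "herm x (y + z) = herm x y + herm x z"
  by (simp add: herm_def sum.distrib distrib_left)
lemma herm_diff_right: "herm x (y - z) = herm x y - herm x z"
  by (simp add: herm_def sum_subtractf right_diff_distrib)
lemma herm_smult_right: "herm x (c *s y) = c * herm x y"
  by (simp add: herm_def sum_distrib_left mult_ac)
lemma herm_diff_left: "herm (x - y) z = herm x z - herm y z"
  by (simp add: herm_def sum_subtractf left_diff_distrib)
lemma herm_smult_left: "herm (c *s x) y = cnj c * herm x y"
  by (simp add: herm_def sum_distrib_left mult_ac)
lemma herm_zero_right[simp]: "herm x 0 = 0"
  by (simp add: herm_def)

lemma herm_self_zero:
  assumes "herm x x = 0" shows "x = 0"
proof -
  have "herm x x = of_real (\<Sum>k\<in>UNIV. (norm (x$k))^2)"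
    unfolding herm_def of_real_sum
    by (rule sum.cong) (simp_all add: complex_norm_square mult.commute del: of_real_power)
  with assms have "(\<Sum>k\<in>UNIV. (norm (x$k))^2) = 0" by (metis of_real_eq_0_iff)
  then have "\<forall>k\<in>UNIV. (norm (x$k))^2 = 0"
    by (subst (asm) sum_nonneg_eq_0_iff) auto
  then show ?thesis by (simp add: vec_eq_iff)
qed

lemma herm_adj: "herm (A *v x) y = herm x (adj A *v y)"
proof -
  have "herm (A *v x) y = (\<Sum>k\<in>UNIV. \<Sum>l\<in>UNIV. cnj (A$k$l) * cnj (x$l) * y$k)"
    unfolding herm_def matrix_vector_mult_def
    by (intro sum.cong refl) (simp add: sum_distrib_right sum_distrib_left mult_ac)
  also have "\<dots> = (\<Sum>l\<in>UNIV. \<Sum>k\<in>UNIV. cnj (A$k$l) * cnj (x$l) * y$k)" by (rule sum.swap)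
  also have "\<dots> = herm x (adj A *v y)"
    unfolding herm_def adj_def matrix_vector_mult_def
    by (intro sum.cong refl) (simp add: sum_distrib_right sum_distrib_left mult_ac)
  finally show ?thesis .
qed

lemma unitary_herm:
  assumes "unitary g" shows "herm (g *v x) (g *v y) = herm x y"
proof -
  have "adj g ** g = mat 1" using assms by (simp add: unitary_def adj_def)
  then show ?thesis by (simp add: herm_adj matrix_vector_mul_assoc)
qed

lemma lin_herm: "(\<Sum>k\<in>UNIV. a $ k * v $ k) = herm (cv a) v"
  by (simp add: herm_def cv_def)

lemma hyperplane_herm:
  assumes "is_hyperplane H" shows "\<exists>u. u \<noteq> 0 \<and> H = {v. herm u v = 0}"
proof -
  obtain a where a: "a \<noteq> 0" "H = {v. (\<Sum>k\<in>UNIV. a $ k * v $ k) = 0}"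
    using assms unfolding is_hyperplane_def by blast
  have "cv a \<noteq> 0" using a(1) by (auto simp: cv_def vec_eq_iff)
  then show ?thesis using a(2) by (auto simp: lin_herm)
qed

lemma orth_decomp:
  assumes "u \<noteq> 0" "\<And>x. herm u x = 0 \<Longrightarrow> herm z x = 0"
  shows "z = (herm u z / herm u u) *s u"
proof -
  define c where "c = herm u z / herm u u"
  have uu: "herm u u \<noteq> 0" using assms(1) herm_self_zero by blast
  define y where "y = z - c *s u"
  have "herm u y = 0" using uu by (simp add: y_def herm_diff_right herm_smult_right c_def)
  then have "herm z y = 0" using assms(2) by blast
  have "herm y y = herm z y - cnj c * herm u y"
    by (simp add: y_def herm_diff_left herm_smult_left)
  then have "herm y y = 0" using \<open>herm u y = 0\<close> \<open>herm z y = 0\<close> by simp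
  then have "y = 0" by (rule herm_self_zero)
  then show ?thesis by (simp add: y_def c_def)
qed

lemma fix_orth:
  assumes "unitary g" "g *v x = x"
  shows "herm (g *v v - v) x = 0"
proof -
  have "herm (g *v v) x = herm (g *v v) (g *v x)" using assms(2) by simp
  also have "\<dots> = herm v x" using unitary_herm[OF assms(1)] by simp
  finally show ?thesis by (simp add: herm_diff_left)
qed

lemma hyper_sub_eq:
  assumes "u \<noteq> 0" "w \<noteq> 0" "{v. herm u v = 0} \<subseteq> {v. herm w v = 0}"
  shows "{v. herm u v = 0} = {v. herm w v = 0}"
proof -
  have uu: "herm u u \<noteq> 0" using assms(1) herm_self_zero by blast
  have key: "herm w v = (herm u v / herm u u) * herm w u" for v
  proof -
    have "herm u (v - (herm u v / herm u u) *s u) = 0"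
      using uu by (simp add: herm_diff_right herm_smult_right)
    then have "herm w (v - (herm u v / herm u u) *s u) = 0" using assms(3) by blast
    then show ?thesis by (simp add: herm_diff_right herm_smult_right)
  qed
  have "herm w u \<noteq> 0"
  proof
    assume "herm w u = 0"
    then have "herm w w = 0" using key[of w] by simp
    then show False using assms(2) herm_self_zero by blast
  qed
  then show ?thesis
  proof (intro equalityI assms(3) subsetI)
    fix v assume "v \<in> {v. herm w v = 0}"
    then have "herm u v / herm u u * herm w u = 0" using key[of v] by simp
    then show "v \<in> {v. herm u v = 0}" using uu \<open>herm w u \<noteq> 0\<close> by simp
  qed
qed


lemma adj_adj[simp]: "adj (adj A) = A"
  by (simp add: adj_def vec_eq_iff)

lemma cv_cv[simp]: "cv (cv a) = a"
  by (simp add: cv_def vec_eq_iff)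

lemma hyperplane_of_herm:
  assumes "u \<noteq> 0" shows "is_hyperplane {v. herm u v = 0}"
proof -
  have "cv u \<noteq> 0" using assms by (metis cv_cv cv_def vec_lambda_unique zero_index complex_cnj_zero)
  then show ?thesis unfolding is_hyperplane_def by (intro exI[of _ "cv u"]) (simp add: lin_herm)
qed

fun mpow :: "'n::finite cmat \<Rightarrow> nat \<Rightarrow> 'n cmat" where
  "mpow g 0 = mat 1"
| "mpow g (Suc n) = g ** mpow g n"

lemma mpow_add: "mpow g (a + b) = mpow g a ** mpow g b"
  by (induction a) (simp_all add: matrix_mul_assoc)

lemma act_mul: "act (A ** B) H = act A (act B H)"
  by (simp add: act_def image_image matrix_vector_mul_assoc)

lemma act_one[simp]: "act (mat 1) H = H"
  by (simp add: act_def)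

locale prg =
  fixes G :: "'n::finite cmat set"
  assumes prg: "pseudo_reflection_group G"
begin

lemma finG: "finite G" using prg by (simp add: pseudo_reflection_group_def)
lemma oneG: "mat 1 \<in> G" using prg by (simp add: pseudo_reflection_group_def)
lemma mulG: "g \<in> G \<Longrightarrow> h \<in> G \<Longrightarrow> g ** h \<in> G"
  using prg by (simp add: pseudo_reflection_group_def)
lemma unitG: "g \<in> G \<Longrightarrow> unitary g"
  using prg by (simp add: pseudo_reflection_group_def)
lemma adj_left: "g \<in> G \<Longrightarrow> adj g ** g = mat 1"
  using unitG by (simp add: unitary_def adj_def)

lemma mpow_in: "g \<in> G \<Longrightarrow> mpow g n \<in> G"
  by (induction n) (simp_all add: oneG mulG)

lemma cancelG: assumes "g \<in> G" "g ** X = g ** Y" shows "X = Y"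
proof -
  have "X = (adj g ** g) ** X" using adj_left[OF assms(1)] by simp
  also have "\<dots> = adj g ** (g ** X)" by (simp only: matrix_mul_assoc)
  also have "\<dots> = adj g ** (g ** Y)" using assms(2) by simp
  also have "\<dots> = (adj g ** g) ** Y" by (simp only: matrix_mul_assoc)
  also have "\<dots> = Y" using adj_left[OF assms(1)] by simp
  finally show ?thesis .
qed

lemma mpow_cancel: "g \<in> G \<Longrightarrow> mpow g a ** X = mpow g a ** Y \<Longrightarrow> X = Y"
proof (induction a)
  case 0 then show ?case by simp
next
  case (Suc a)
  then have "g ** (mpow g a ** X) = g ** (mpow g a ** Y)" by (simp only: mpow.simps matrix_mul_assoc)
  then have "mpow g a ** X = mpow g a ** Y" using cancelG Suc.prems(1) by blast
  then show ?case using Suc by blast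
qed

lemma inv_props: assumes "g \<in> G" shows "g ** adj g = mat 1" "adj g \<in> G"
proof -
  have "\<not> inj (mpow g)"
  proof
    assume "inj (mpow g)"
    moreover have "range (mpow g) \<subseteq> G" using mpow_in[OF assms] by blast
    then have "finite (range (mpow g))" using finG by (rule finite_subset)
    ultimately have "finite (UNIV :: nat set)" by (rule finite_imageD[rotated])
    then show False by simp
  qed
  then obtain a b where ab: "a \<noteq> b" "mpow g a = mpow g b" unfolding inj_def by blast
  obtain a b where ab2: "a < b" "mpow g a = mpow g b"
  proof (cases "a < b")
    case True then show ?thesis by (intro that[of a b]) (use ab in auto)
  next
    case False then have "b < a" using ab(1) by simp
    then show ?thesis by (intro that[of b a]) (use ab in auto)
  qed
  obtain e where e: "b = a + Suc e" using less_imp_Suc_add[OF ab2(1)] by (metis add_Suc_right)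
  have "mpow g (a + Suc e) = mpow g a ** mpow g (Suc e)" by (rule mpow_add)
  then have "mpow g a ** mpow g (Suc e) = mpow g a ** mat 1"
    using ab2(2) e by (metis matrix_mul_rid)
  then have "mpow g (Suc e) = mat 1" using mpow_cancel[OF assms] by blast
  then have ge: "g ** mpow g e = mat 1" by simp
  have "adj g = adj g ** (g ** mpow g e)" using ge by simp
  also have "\<dots> = mpow g e" using adj_left[OF assms] by (simp add: matrix_mul_assoc)
  finally have "adj g = mpow g e" .
  then show "g ** adj g = mat 1" "adj g \<in> G" using ge mpow_in[OF assms] by auto
qed

lemma adj_right: "g \<in> G \<Longrightarrow> g ** adj g = mat 1" using inv_props by blast
lemma adjG: "g \<in> G \<Longrightarrow> adj g \<in> G" using inv_props by blast

lemma matrix_inv_adj: assumes "g \<in> G" shows "matrix_inv g = adj g"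
proof -
  have ex: "\<exists>A'. g ** A' = mat 1 \<and> A' ** g = mat 1"
    using adj_left[OF assms] adj_right[OF assms] by blast
  define A' where "A' = matrix_inv g"
  have A': "g ** A' = mat 1 \<and> A' ** g = mat 1"
    unfolding A'_def matrix_inv_def by (rule someI_ex[OF ex])
  have "A' = (adj g ** g) ** A'" using adj_left[OF assms] by simp
  also have "\<dots> = adj g" using A' by (simp flip: matrix_mul_assoc)
  finally show ?thesis by (simp add: A'_def)
qed

lemma adjv1[simp]: "g \<in> G \<Longrightarrow> adj g *v (g *v y) = y"
  by (simp add: matrix_vector_mul_assoc adj_left)
lemma adjv2[simp]: "g \<in> G \<Longrightarrow> g *v (adj g *v y) = y"
  by (simp add: matrix_vector_mul_assoc adj_right)

lemma act_inv1: "g \<in> G \<Longrightarrow> act (adj g) (act g H) = H"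
  by (simp add: act_mul[symmetric] adj_left)
lemma act_inv2: "g \<in> G \<Longrightarrow> act g (act (adj g) H) = H"
  by (simp add: act_mul[symmetric] adj_right)
lemma act_inj: "g \<in> G \<Longrightarrow> act g X = act g Y \<Longrightarrow> X = Y"
  by (metis act_inv1)

lemma mem_act: assumes "g \<in> G" shows "y \<in> act g H \<longleftrightarrow> adj g *v y \<in> H"
proof
  assume "y \<in> act g H" then obtain x where "x \<in> H" "y = g *v x" by (auto simp: act_def)
  then show "adj g *v y \<in> H" using adj_left[OF assms] by (simp add: matrix_vector_mul_assoc)
next
  assume "adj g *v y \<in> H"
  moreover have "y = g *v (adj g *v y)" using adj_right[OF assms] by (simp add: matrix_vector_mul_assoc)
  ultimately show "y \<in> act g H" by (auto simp: act_def)
qed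

lemma fixspace_conj: assumes "g \<in> G" shows "fixspace (g ** s ** adj g) = act g (fixspace s)"
proof (rule set_eqI)
  fix v
  have "v \<in> fixspace (g ** s ** adj g) \<longleftrightarrow> g *v (s *v (adj g *v v)) = v"
    by (simp add: fixspace_def matrix_vector_mul_assoc matrix_mul_assoc)
  also have "\<dots> \<longleftrightarrow> s *v (adj g *v v) = adj g *v v"
  proof
    assume "g *v (s *v (adj g *v v)) = v"
    then have "adj g *v (g *v (s *v (adj g *v v))) = adj g *v v" by simp
    then show "s *v (adj g *v v) = adj g *v v" using assms by simp
  next
    assume "s *v (adj g *v v) = adj g *v v"
    then show "g *v (s *v (adj g *v v)) = v" using assms by simp
  qed
  also have "\<dots> \<longleftrightarrow> v \<in> act g (fixspace s)" using mem_act[OF assms] by (simp add: fixspace_def)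
  finally show "v \<in> fixspace (g ** s ** adj g) \<longleftrightarrow> v \<in> act g (fixspace s)" .
qed

lemma hyperplane_act: assumes "g \<in> G" "is_hyperplane H" shows "is_hyperplane (act g H)"
proof -
  obtain u where u: "u \<noteq> 0" "H = {v. herm u v = 0}" using hyperplane_herm[OF assms(2)] by blast
  have "act g H = {y. herm (g *v u) y = 0}"
    using mem_act[OF assms(1)] u(2) by (auto simp: herm_adj)
  moreover have "g *v u \<noteq> 0"
  proof
    assume "g *v u = 0"
    then have "adj g *v (g *v u) = 0" by simp
    then show False using u(1) adj_left[OF assms(1)] by (simp add: matrix_vector_mul_assoc)
  qed
  ultimately show ?thesis using hyperplane_of_herm by simp
qed

lemma prefl_G: "s \<in> prefl G \<Longrightarrow> s \<in> G" by (simp add: prefl_def)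

lemma conj_prefl: assumes "g \<in> G" "s \<in> prefl G" shows "g ** s ** adj g \<in> prefl G"
proof -
  have sG: "s \<in> G" "s \<noteq> mat 1" "is_hyperplane (fixspace s)" using assms(2) by (auto simp: prefl_def)
  have "g ** s ** adj g \<in> G" using mulG sG(1) assms(1) adjG by blast
  moreover have "g ** s ** adj g \<noteq> mat 1"
  proof
    assume "g ** s ** adj g = mat 1"
    then have "g *v (s *v (adj g *v y)) = y" for y by (metis matrix_vector_mul_assoc matrix_vector_mul_lid)
    then have "s *v x = mat 1 *v x" for x using assms(1)
      by (metis adjv1 adjv2 matrix_vector_mul_lid)
    then have "s = mat 1" by (simp add: matrix_eq)
    then show False using sG(2) by simp
  qed
  moreover have "is_hyperplane (fixspace (g ** s ** adj g))"
    using fixspace_conj[OF assms(1)] hyperplane_act[OF assms(1) sG(3)] by simp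
  ultimately show ?thesis by (simp add: prefl_def)
qed

lemma act_hyps: assumes "g \<in> G" "H \<in> hyps G" shows "act g H \<in> hyps G"
proof -
  obtain s where "s \<in> prefl G" "H = fixspace s" using assms(2) by (auto simp: hyps_def)
  then show ?thesis using fixspace_conj[OF assms(1)] conj_prefl[OF assms(1)]
    by (metis hyps_def image_eqI)
qed


lemma conj_cancel: assumes "w \<in> G" shows "adj w ** (w ** a ** adj w) ** w = a"
  using assms by (simp add: matrix_eq matrix_vector_mul_assoc[symmetric])

lemma Rij_conj: assumes "w \<in> G" "r \<in> Rij G i j"
  shows "w ** r ** adj w \<in> Rij G (act w i) (act w j)"
  using assms by (auto simp: Rij_def conj_prefl act_mul act_inv1)

lemma alpha_act: assumes "w \<in> G" "admissible G mu tau"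
  shows "alpha G mu (act w i) (act w j) = alpha G mu i j"
  unfolding alpha_def
proof (rule sum.reindex_bij_witness[where j="\<lambda>r. adj w ** r ** w" and i="\<lambda>r. w ** r ** adj w"])
  fix a assume a: "a \<in> Rij G (act w i) (act w j)"
  show "w ** (adj w ** a ** w) ** adj w = a"
    using conj_cancel[OF adjG[OF assms(1)]] by simp
  have "adj w ** a ** adj (adj w) \<in> Rij G (act (adj w) (act w i)) (act (adj w) (act w j))"
    using Rij_conj[OF adjG[OF assms(1)] a] .
  then show "adj w ** a ** w \<in> Rij G i j" using assms(1) by (simp add: act_inv1)
  have "a \<in> prefl G" using a by (simp add: Rij_def)
  moreover have "matrix_inv (adj w) = w" using matrix_inv_adj[OF adjG[OF assms(1)]] by simp
  ultimately show "mu (adj w ** a ** w) = mu a"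
    using assms adjG unfolding admissible_def by metis
next
  fix b assume b: "b \<in> Rij G i j"
  show "adj w ** (w ** b ** adj w) ** w = b" using conj_cancel[OF assms(1)] .
  show "w ** b ** adj w \<in> Rij G (act w i) (act w j)" using Rij_conj[OF assms(1) b] .
qed

lemma stab_act: assumes "g \<in> stab G H" shows "act g H = H"
proof -
  have "(\<lambda>v. g *v v) ` H = (\<lambda>v. v) ` H" by (rule image_cong) (use assms in \<open>auto simp: stab_def\<close>)
  then show ?thesis by (simp add: act_def)
qed

lemma sgen_stab: assumes "H \<in> hyps G" shows "sgen G H \<in> stab G H"
proof -
  obtain s0 where s0: "s0 \<in> prefl G" "H = fixspace s0" using assms by (auto simp: hyps_def)
  obtain u where u: "u \<noteq> 0" "H = {v. herm u v = 0}"
    using hyperplane_herm s0 by (auto simp: prefl_def)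
  define S where "S = stab G H"
  have uu: "herm u u \<noteq> 0" using u(1) herm_self_zero by blast
  define lam where "lam g = herm u (g *v u) / herm u u" for g
  have fixH: "g *v x = x" if "g \<in> S" "herm u x = 0" for g x
    using that u(2) by (auto simp: S_def stab_def)
  have SG: "g \<in> G" if "g \<in> S" for g using that by (simp add: S_def stab_def)
  have eig: "g *v u = lam g *s u" if g: "g \<in> S" for g
  proof -
    define z where "z = g *v u - u"
    have "z = (herm u z / herm u u) *s u"
    proof (rule orth_decomp[OF u(1)])
      fix x assume "herm u x = 0"
      then show "herm z x = 0" unfolding z_def using fix_orth unitG SG fixH g by blast
    qed
    moreover have "herm u z / herm u u = lam g - 1"
      using uu by (simp add: z_def lam_def herm_diff_right diff_divide_distrib)
    ultimately have "z = (lam g - 1) *s u" by simp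
    then show ?thesis unfolding z_def by (simp add: vec_eq_iff algebra_simps)
  qed
  have formula: "g *v v = v + ((herm u v / herm u u) * (lam g - 1)) *s u" if g: "g \<in> S" for g v
  proof -
    define t where "t = herm u v / herm u u"
    define x where "x = v - t *s u"
    have "herm u x = 0" using uu by (simp add: x_def t_def herm_diff_right herm_smult_right)
    then have gx: "g *v x = x" using fixH g by blast
    have "v = x + t *s u" by (simp add: x_def)
    then have "g *v v = g *v x + t *s (g *v u)"
      by (metis matrix_vector_right_distrib vector_scalar_commute)
    also have "\<dots> = x + t *s (lam g *s u)" using gx eig g by simp
    finally have "g *v v = x + t *s (lam g *s u)" .
    then show ?thesis unfolding t_def[symmetric] by (simp add: x_def vec_eq_iff algebra_simps)
  qed
  have lam_inj: "g = h" if "g \<in> S" "h \<in> S" "lam g = lam h" for g h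
    using that formula by (simp add: matrix_eq)
  have lam_of: "lam g = c" if "g *v u = c *s u" for g c
    using that uu by (simp add: lam_def herm_smult_right)
  have S_mul: "g ** h \<in> S" if "g \<in> S" "h \<in> S" for g h
    using that mulG by (auto simp: S_def stab_def matrix_vector_mul_assoc[symmetric])
  have lam_mul: "lam (g ** h) = lam g * lam h" if "g \<in> S" "h \<in> S" for g h
  proof (rule lam_of)
    have "(g ** h) *v u = g *v (lam h *s u)" using eig that by (simp add: matrix_vector_mul_assoc[symmetric])
    also have "\<dots> = lam h *s (lam g *s u)" using eig that by (simp add: vector_scalar_commute)
    finally show "(g ** h) *v u = (lam g * lam h) *s u" by (simp add: vector_smult_assoc mult.commute)
  qed
  have lam_nz: "lam g \<noteq> 0" if g: "g \<in> S" for g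
  proof
    assume "lam g = 0"
    then have "g *v u = 0" using eig g by (simp add: vec_eq_iff)
    then have "adj g *v (g *v u) = 0" by simp
    then show False using u(1) SG g by simp
  qed
  have one_S: "mat 1 \<in> S" using oneG by (simp add: S_def stab_def)
  have s0_S: "s0 \<in> S" using s0 prefl_G by (simp add: S_def stab_def fixspace_def)
  have s0_ne: "s0 \<noteq> mat 1" using s0 by (simp add: prefl_def)
  have finS: "finite S" using finG by (simp add: S_def stab_def)
  define m where "m = card S"
  have m2: "m \<ge> 2"
  proof -
    have "card {mat 1, s0} \<le> card S" using one_S s0_S finS by (intro card_mono) auto
    then show ?thesis using s0_ne by (simp add: m_def)
  qed
  define L where "L = lam ` S"
  have injL: "inj_on lam S" using lam_inj by (auto simp: inj_on_def)
  have cardL: "card L = m" using injL by (simp add: L_def m_def card_image)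
  have finL: "finite L" using finS by (simp add: L_def)
  have Lmul: "a * b \<in> L" if "a \<in> L" "b \<in> L" for a b
    using that S_mul lam_mul by (auto simp: L_def) (metis image_eqI)
  have L0: "0 \<notin> L" using lam_nz by (auto simp: L_def)
  have Lpow: "c ^ m = 1" if c: "c \<in> L" for c
  proof -
    have cnz: "c \<noteq> 0" using c L0 by auto
    define f where "f x = c * x" for x :: complex
    have injf: "inj_on f L" using cnz by (auto simp: inj_on_def f_def)
    have sub: "f ` L \<subseteq> L" using Lmul c by (auto simp: f_def)
    have "card (f ` L) = card L" using injf by (simp add: card_image)
    then have fL: "f ` L = L" using card_subset_eq[OF finL sub] by simp
    have "prod id L = prod id (f ` L)" using fL by simp
    also have "\<dots> = prod (id \<circ> f) L" using injf by (rule prod.reindex)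
    also have "\<dots> = c ^ card L * prod id L" by (simp add: f_def prod.distrib)
    finally have "(c ^ card L - 1) * prod id L = 0" by (simp add: algebra_simps)
    moreover have "prod id L \<noteq> 0" using finL L0 by simp
    ultimately show ?thesis using cardL by simp
  qed
  have mpos: "m > 0" using m2 by simp
  have L_roots: "L = {z. z ^ m = 1}"
  proof (rule card_subset_eq)
    show "finite {z::complex. z ^ m = 1}" using mpos by (intro finite_roots_unity) simp
    show "L \<subseteq> {z. z ^ m = 1}" using Lpow by auto
    show "card L = card {z::complex. z ^ m = 1}" using cardL card_roots_unity_eq[OF mpos] by simp
  qed
  define \<zeta> where "\<zeta> = exp (2 * pi * \<i> / of_nat m)"
  have e: "exp (of_nat m * (2 * pi * \<i> / of_nat m)) = \<zeta> ^ m"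
    unfolding \<zeta>_def by (rule exp_of_nat_mult)
  have "of_nat m * (2 * pi * \<i> / of_nat m) = 2 * of_real pi * \<i>" using mpos by simp
  then have "\<zeta> ^ m = 1" using e exp_two_pi_i by metis
  then have "\<zeta> \<in> L" using L_roots by simp
  then obtain g0 where g0: "g0 \<in> S" "lam g0 = \<zeta>" by (auto simp: L_def)
  have z1: "\<zeta> \<noteq> 1"
  proof
    assume "\<zeta> = 1"
    then obtain n :: int where n: "Im (2 * pi * \<i> / of_nat m) = of_int (2 * n) * pi"
      by (auto simp: \<zeta>_def exp_eq_1)
    then have "2 * pi / real m = 2 * real_of_int n * pi" by simp
    then have "1 = real_of_int n * real m" using mpos by (simp add: field_simps)
    then have "1 = n * int m" by (metis of_int_eq_iff of_int_mult of_int_of_nat_eq of_int_1)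
    then have "n * int m = 1" by simp
    then have "int m = 1 \<or> int m = -1" using zmult_eq_1_iff[of n "int m"] by auto
    then show False using m2 by auto
  qed
  define P where "P s \<longleftrightarrow> s \<in> stab G H \<and> (\<exists>v. v \<noteq> 0 \<and> s *v v = \<zeta> *s v)" for s
  have Pg0: "P g0" unfolding P_def using g0 eig u(1) by (auto simp: S_def)
  have Puniq: "s = g0" if Ps: "P s" for s
  proof -
    obtain v where v: "s \<in> S" "v \<noteq> 0" "s *v v = \<zeta> *s v" using Ps by (auto simp: P_def S_def)
    define t where "t = herm u v / herm u u"
    have eq: "\<zeta> *s v = v + (t * (lam s - 1)) *s u" using formula[OF v(1)] v(3) by (simp add: t_def)
    have "herm u (\<zeta> *s v) = herm u (v + (t * (lam s - 1)) *s u)" using eq by simp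
    then have "\<zeta> * herm u v = herm u v + t * (lam s - 1) * herm u u"
      by (simp add: herm_smult_right herm_add_right)
    then have "\<zeta> * herm u v = herm u v + (lam s - 1) * (t * herm u u)" by (simp add: algebra_simps)
    moreover have "t * herm u u = herm u v" using uu by (simp add: t_def)
    ultimately have "\<zeta> * herm u v = herm u v + (lam s - 1) * herm u v" by simp
    then have h: "(\<zeta> - lam s) * herm u v = 0" by (simp add: algebra_simps)
    have "herm u v \<noteq> 0"
    proof
      assume "herm u v = 0"
      then have "\<zeta> *s v = v" using eq by (simp add: t_def)
      then have "\<zeta> * v $ k = v $ k" for k by (metis vector_smult_component)
      then have "(\<zeta> - 1) * v $ k = 0" for k by (simp add: algebra_simps)
      then have "v = 0" using z1 by (simp add: vec_eq_iff)
      then show False using v(2) by simp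
    qed
    then have "lam s = \<zeta>" using h by simp
    then show ?thesis using lam_inj v(1) g0 by simp
  qed
  have "P (sgen G H)"
    unfolding sgen_def
  proof -
    have "\<exists>!s. P s" using Pg0 Puniq by blast
    then have "P (THE s. P s)" by (rule theI')
    then show "P (THE s. s \<in> stab G H \<and> (\<exists>v. v \<noteq> 0 \<and> s *v v = exp (2 * pi * \<i> / of_nat (card (stab G H))) *s v))"
      by (simp add: P_def \<zeta>_def m_def S_def)
  qed
  then show ?thesis by (simp add: P_def)
qed


lemma act_fixspace: "act s (fixspace s) = fixspace s"
proof -
  have "(\<lambda>v. s *v v) ` fixspace s = (\<lambda>v. v) ` fixspace s"
    by (rule image_cong) (auto simp: fixspace_def)
  then show ?thesis by (simp add: act_def)
qed

lemma hyps_herm: assumes "H \<in> hyps G" shows "\<exists>u. u \<noteq> 0 \<and> H = {v. herm u v = 0}"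
  using assms hyperplane_herm by (auto simp: hyps_def prefl_def)

lemma transversal_Rij:
  assumes "i \<in> hyps G" "j \<in> hyps G" "transversal G i j"
  shows "Rij G i j = {}"
proof (rule ccontr)
  assume "Rij G i j \<noteq> {}"
  then obtain s where s: "s \<in> prefl G" "act s j = i" by (auto simp: Rij_def)
  have ij: "i \<noteq> j" and ab: "above G (i \<inter> j) = {i, j}" using assms(3) by (auto simp: transversal_def)
  have sG: "s \<in> G" using s prefl_G by blast
  define Hs where "Hs = fixspace s"
  have Hs_h: "Hs \<in> hyps G" using s(1) by (simp add: hyps_def Hs_def)
  obtain a where a: "a \<noteq> 0" "Hs = {v. herm a v = 0}" using hyps_herm[OF Hs_h] by blast
  obtain c where c: "c \<noteq> 0" "i = {v. herm c v = 0}" using hyps_herm[OF assms(1)] by blast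
  obtain b where b: "b \<noteq> 0" "j = {v. herm b v = 0}" using hyps_herm[OF assms(2)] by blast
  have fixHs: "s *v x = x" if "herm a x = 0" for x using that a(2) by (auto simp: Hs_def fixspace_def)
  have dec: "s *v v - v = (herm a (s *v v - v) / herm a a) *s a" for v
  proof (rule orth_decomp[OF a(1)])
    fix x assume "herm a x = 0"
    then show "herm (s *v v - v) x = 0" using fix_orth[OF unitG[OF sG] fixHs] by blast
  qed
  have into: "herm c (s *v x) = 0" if "x \<in> j" for x
  proof -
    have "s *v x \<in> act s j" using that by (auto simp: act_def)
    then show ?thesis using s(2) c(2) by simp
  qed
  have key: "(herm a (s *v v - v) / herm a a) * herm c a = herm c (s *v v) - herm c v" for v
  proof -
    have "herm c (s *v v - v) = herm c ((herm a (s *v v - v) / herm a a) *s a)" using dec[of v] by simp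
    then show ?thesis by (simp add: herm_smult_right herm_diff_right)
  qed
  have sub: "i \<inter> j \<subseteq> Hs"
  proof
    fix v assume v: "v \<in> i \<inter> j"
    have "herm c (s *v v) = 0" using into v by blast
    moreover have "herm c v = 0" using v c(2) by blast
    ultimately have k0: "(herm a (s *v v - v) / herm a a) * herm c a = 0" using key[of v] by simp
    show "v \<in> Hs"
    proof (cases "herm c a = 0")
      case False
      then have "herm a (s *v v - v) / herm a a = 0" using k0 by simp
      then have "s *v v - v = 0" using dec[of v] by (metis vector_smult_lzero)
      then show ?thesis by (simp add: Hs_def fixspace_def)
    next
      case True
      have "j \<subseteq> i"
      proof
        fix x assume x: "x \<in> j"
        have "herm c (s *v x) - herm c x = 0" using key[of x] True by simp
        then show "x \<in> i" using into[OF x] c(2) by simp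
      qed
      then have "{v. herm b v = 0} = {v. herm c v = 0}" using hyper_sub_eq[OF b(1) c(1)] b(2) c(2) by simp
      then have "i = j" using b(2) c(2) by simp
      then show ?thesis using ij by simp
    qed
  qed
  then have "Hs \<in> above G (i \<inter> j)" using Hs_h by (simp add: above_def)
  then have "Hs = i \<or> Hs = j" using ab by auto
  then show False
  proof
    assume "Hs = i"
    then have "act s i = i" by (metis Hs_def act_fixspace)
    then have "act s i = act s j" using s(2) by simp
    then show False using act_inj[OF sG] ij by blast
  next
    assume "Hs = j"
    then have "act s j = j" by (metis Hs_def act_fixspace)
    then show False using s(2) ij by simp
  qed
qed

end

lemma sum_delta_mult: fixes f :: "'a \<Rightarrow> complex" assumes "finite S" shows "(\<Sum>m\<in>S. f m * (if m = a then x else 0)) = (if a \<in> S then f a * x else 0)"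
proof -
  have "(\<Sum>m\<in>S. f m * (if m = a then x else 0)) = (\<Sum>m\<in>S. if m = a then f a * x else 0)"
    by (rule sum.cong) auto
  then show ?thesis using assms by (simp add: sum.delta)
qed

locale prga = prg +
  fixes mu :: "'n::finite cmat \<Rightarrow> complex" and tau :: "'n hyp \<Rightarrow> complex"
  assumes adm: "admissible G mu tau"
begin

abbreviation "p \<equiv> pmap G mu tau"

lemma fin_hyps: "finite (hyps G)"
  using finG unfolding hyps_def prefl_def by simp

lemma tau_act: "w \<in> G \<Longrightarrow> H \<in> hyps G \<Longrightarrow> tau (act w H) = tau H"
  using adm by (simp add: admissible_def)

lemma alpha_act': "w \<in> G \<Longrightarrow> alpha G mu (act w i) (act w j) = alpha G mu i j"
  using alpha_act adm by blast

lemma emul_p_right: "i \<in> hyps G \<Longrightarrow> emul G A (p i) k l = A k i * p i i l"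
  unfolding emul_def pmap_def by (simp add: sum_delta_mult fin_hyps)

lemma emul_iota_right: "w \<in> G \<Longrightarrow> l \<in> hyps G \<Longrightarrow> emul G A (iota w) k l = A k (act w l)"
  unfolding emul_def iota_def by (simp add: sum_delta_mult act_hyps fin_hyps)

lemma p_entry: "p i k l = (if k = i then (if l = i then tau i else alpha G mu i l) else 0)"
  by (simp add: pmap_def)

lemma iota_entry: "iota w k l = (if k = act w l then 1 else 0)"
  by (simp add: iota_def)

lemma rel_fix:
  assumes "w \<in> G" "i \<in> hyps G" "act w i = i"
  shows "eeq G (emul G (iota w) (p i)) (p i) \<and> eeq G (emul G (p i) (iota w)) (p i)"
proof -
  have a: "act w l = i \<longleftrightarrow> l = i" "i = act w l \<longleftrightarrow> l = i" for l using act_inj[OF assms(1)] assms(3) by metis+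
  have b: "alpha G mu i (act w l) = alpha G mu i l" for l using alpha_act'[OF assms(1), of i l] assms(3) by simp
  show ?thesis unfolding eeq_def
    using assms a b by (simp add: emul_p_right emul_iota_right p_entry iota_entry)
qed

lemma main: "satisfies_BG_relations G mu tau iota p"
proof -
  {
    have "eeq G (iota (mat 1)) eone" by (simp add: eeq_def iota_def eone_def)
  }
  note r0 = this
  {
    fix w1 w2 assume w: "w1 \<in> G" "w2 \<in> G"
    have "eeq G (emul G (iota w1) (iota w2)) (iota (w1 ** w2))"
      using w by (simp add: eeq_def emul_iota_right iota_entry act_mul)
  }
  note r1 = this
  {
    fix i assume i: "i \<in> hyps G"
    have "sgen G i \<in> stab G i" using sgen_stab[OF i] .
    then have "sgen G i \<in> G" "act (sgen G i) i = i" using stab_act by (auto simp: stab_def)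
    then have "eeq G (emul G (iota (sgen G i)) (p i)) (p i) \<and> eeq G (emul G (p i) (iota (sgen G i))) (p i)"
      using rel_fix i by blast
  }
  note r2 = this[THEN conjunct1] this[THEN conjunct2]
  {
    fix i w assume "i \<in> hyps G" "w \<in> G" "act w i = i \<and> noncrossing_edge G (i \<inter> fixspace w)"
    then have "eeq G (emul G (iota w) (p i)) (p i) \<and> eeq G (emul G (p i) (iota w)) (p i)"
      using rel_fix by blast
  }
  note r3 = this[THEN conjunct1] this[THEN conjunct2]
  {
    fix i assume i: "i \<in> hyps G"
    have "eeq G (emul G (p i) (p i)) (esmult (tau i) (p i))"
      using i by (simp add: eeq_def emul_p_right p_entry esmult_def)
  }
  note r4 = this
  {
    fix i j w assume ij: "i \<in> hyps G" "j \<in> hyps G" "w \<in> G" "act w j = i"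
    have a: "act w l = i \<longleftrightarrow> l = j" "i = act w l \<longleftrightarrow> l = j" for l using act_inj[OF ij(3)] ij(4) by metis+
    have b: "alpha G mu i (act w l) = alpha G mu j l" for l using alpha_act'[OF ij(3), of j l] ij(4) by simp
    have c: "tau i = tau j" using tau_act[OF ij(3) ij(2)] ij(4) by simp
    have "eeq G (emul G (iota w) (p j)) (emul G (p i) (iota w))"
      using ij a b c by (simp add: eeq_def emul_p_right emul_iota_right p_entry iota_entry)
  }
  note r5 = this
  {
    fix i j assume ij: "i \<in> hyps G" "j \<in> hyps G" "transversal G i j"
    have "transversal G j i" using ij(3) by (auto simp: transversal_def Int_commute insert_commute)
    then have "Rij G i j = {}" "Rij G j i = {}" using transversal_Rij ij by blast+
    then have "alpha G mu i j = 0" "alpha G mu j i = 0" by (simp_all add: alpha_def)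
    moreover have "i \<noteq> j" using ij(3) by (simp add: transversal_def)
    ultimately have "eeq G (emul G (p i) (p j)) (emul G (p j) (p i))"
      using ij by (simp add: eeq_def emul_p_right p_entry)
  }
  note r6 = this
  {
    fix i j assume ij: "i \<in> hyps G" "j \<in> hyps G"
      "i \<noteq> j \<and> noncrossing_edge G (i \<inter> j) \<and> Rij G i j \<noteq> {}"
    have inej: "i \<noteq> j" using ij(3) by simp
    define R where "R = Rij G i j"
    have sR: "s \<in> G" "act s j = i" if "s \<in> R" for s using that prefl_G by (auto simp: R_def Rij_def)
    have lhs: "emul G (p i) (p j) k l = (if k = i then alpha G mu i j * p j j l else 0)" for k l
      using ij inej by (simp add: emul_p_right p_entry)
    have rsum_e: "rsum G mu i j k j = (if k = i then alpha G mu i j else 0)" for k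
    proof -
      have "rsum G mu i j k j = (\<Sum>s\<in>R. mu s * (if k = i then 1 else 0))"
        unfolding rsum_def R_def[symmetric] iota_entry using sR by (intro sum.cong) auto
      then show ?thesis by (simp add: alpha_def R_def)
    qed
    have pv: "p i i (act s l) = p j j l" if "s \<in> R" for s l
    proof -
      have a: "act s l = i \<longleftrightarrow> l = j" "i = act s l \<longleftrightarrow> l = j" using act_inj[OF sR(1)[OF that]] sR(2)[OF that] by metis+
      have b: "alpha G mu i (act s l) = alpha G mu j l" using alpha_act'[OF sR(1)[OF that], of j l] sR(2)[OF that] by simp
      have c: "tau i = tau j" using tau_act[OF sR(1)[OF that] ij(2)] sR(2)[OF that] by simp
      show ?thesis using a b c ij(3) by (simp add: p_entry)
    qed
    have rhs2: "emul G (p i) (rsum G mu i j) k l = (if k = i then alpha G mu i j * p j j l else 0)"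
      if l: "l \<in> hyps G" for k l
    proof (cases "k = i")
      case True
      have "emul G (p i) (rsum G mu i j) k l = (\<Sum>m\<in>hyps G. p i i m * (\<Sum>s\<in>R. mu s * (if m = act s l then 1 else 0)))"
        unfolding emul_def rsum_def R_def[symmetric] iota_entry using True by (simp add: p_entry)
      also have "\<dots> = (\<Sum>m\<in>hyps G. \<Sum>s\<in>R. mu s * (p i i m * (if m = act s l then 1 else 0)))"
        by (simp add: sum_distrib_left mult_ac)
      also have "\<dots> = (\<Sum>s\<in>R. \<Sum>m\<in>hyps G. mu s * (p i i m * (if m = act s l then 1 else 0)))"
        by (rule sum.swap)
      also have "\<dots> = (\<Sum>s\<in>R. mu s * p j j l)"
      proof (rule sum.cong[OF refl])
        fix s assume s: "s \<in> R"
        have "act s l \<in> hyps G" using act_hyps sR(1)[OF s] l by blast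
        then have "(\<Sum>m\<in>hyps G. mu s * (p i i m * (if m = act s l then 1 else 0))) = mu s * p i i (act s l)"
          by (simp add: sum_distrib_left[symmetric] sum_delta_mult fin_hyps)
        then show "(\<Sum>m\<in>hyps G. mu s * (p i i m * (if m = act s l then 1 else 0))) = mu s * p j j l"
          using pv[OF s] by simp
      qed
      also have "\<dots> = alpha G mu i j * p j j l" by (simp add: alpha_def R_def sum_distrib_right)
      finally show ?thesis using True by simp
    next
      case False
      then show ?thesis by (simp add: emul_def p_entry)
    qed
    have "eeq G (emul G (p i) (p j)) (emul G (rsum G mu i j) (p j)) \<and>
          eeq G (emul G (p i) (p j)) (emul G (p i) (rsum G mu i j))"
      unfolding eeq_def using ij lhs rhs2 rsum_e by (simp add: emul_p_right)
  }
  note r7 = this[THEN conjunct1] this[THEN conjunct2]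
  {
    fix i j assume ij: "i \<in> hyps G" "j \<in> hyps G"
      "i \<noteq> j \<and> noncrossing_edge G (i \<inter> j) \<and> Rij G i j = {}"
    then have "alpha G mu i j = 0" "i \<noteq> j" "j \<noteq> i" by (auto simp: alpha_def)
    then have "eeq G (emul G (p i) (p j)) ezero"
      using ij by (simp add: eeq_def emul_p_right p_entry ezero_def)
  }
  note r8 = this
  show ?thesis unfolding satisfies_BG_relations_def
    by (intro conjI ballI impI allI) (blast intro: r0 r1 r2 r3 r4 r5 r6 r7 r8)+
qed

end

theorem theorem5p2:
  fixes G :: "'n::finite cmat set"
    and mu :: "'n cmat \<Rightarrow> complex" and tau :: "'n hyp \<Rightarrow> complex"
  assumes "pseudo_reflection_group G"
    and "admissible G mu tau"
  shows "satisfies_BG_relations G mu tau iota (pmap G mu tau)"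
proof -
  interpret prga G mu tau using assms by (unfold_locales)
  show ?thesis by (rule main)
qed

end
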